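(* Let $\Omega\subset\mathbb{R}^d$ be open with Lipschitz boundary, $\pi\in\mathcal M^+(\Omega)$ with $\pi(\Omega)>0$, and let $\varphi:[0,\infty)\to[0,\infty]$ be convex with $\varphi(1)=\varphi'(1)=0$ and $\varphi''(1)=1$. Then there is no constant $c>0$ such that $$\int\Big|\nabla\Big(\varphi'\big(\tfrac{d\mu}{d\pi}\big)\Big)\Big|^2\,d\mu\ \ge\ c\,\mathrm{D}_\varphi(\mu|\pi)$$ holds for all $\mu\in\mathcal M^+(\Omega)$.
   Context: $\mathrm{D}_\varphi(\mu|\nu)=\int\varphi(\frac{d\mu}{d\nu})\,d\nu$ if $\mu\ll\nu$, $+\infty$ otherwise. $\mathcal M^+(\Omega)$: nonnegative finite measures. *)

theory Defs
  imports "HOL-Analysis.Analysis"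
begin

definition lipschitz_boundary :: "'a::euclidean_space set \<Rightarrow> bool" where
  "lipschitz_boundary \<Omega> \<longleftrightarrow>
     (\<forall>x\<in>frontier \<Omega>. \<exists>r>0. \<exists>e. norm e = 1 \<and> (\<exists>g L. lipschitz_on L {z. z \<bullet> e = 0} g \<and>
        \<Omega> \<inter> ball x r = {y \<in> ball x r. y \<bullet> e > g (y - (y \<bullet> e) *\<^sub>R e)}))"

definition finite_measures_on :: "'a::euclidean_space set \<Rightarrow> 'a measure set" where
  "finite_measures_on \<Omega> =
     {\<mu>. sets \<mu> = sets (restrict_space borel \<Omega>) \<and> finite_measure \<mu>}"

definition convex_ennreal_on_nonneg :: "(real \<Rightarrow> ennreal) \<Rightarrow> bool" where
  "convex_ennreal_on_nonneg \<phi> \<longleftrightarrow>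
     (\<forall>x\<ge>0. \<forall>y\<ge>0. \<forall>t\<in>{0..1}.
        \<phi> ((1 - t) * x + t * y) \<le> ennreal (1 - t) * \<phi> x + ennreal t * \<phi> y)"

definition phi_div :: "(real \<Rightarrow> ennreal) \<Rightarrow> 'a measure \<Rightarrow> 'a measure \<Rightarrow> ennreal" where
  "phi_div \<phi> \<mu> \<nu> =
     (if absolutely_continuous \<nu> \<mu>
      then \<integral>\<^sup>+ x. \<phi> (enn2real (RN_deriv \<nu> \<mu> x)) \<partial>\<nu> else \<infinity>)"

end

theory Submission
  imports Defs
begin

lemma exists_pos_point:
  fixes \<phi> :: "real \<Rightarrow> ennreal"
  assumes "\<exists>\<epsilon>>0. \<exists>\<phi>1. (\<forall>x\<in>ball 1 \<epsilon>. \<phi> x < \<infinity> \<and>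
            ((\<lambda>t. enn2real (\<phi> t)) has_real_derivative \<phi>1 x) (at x))
          \<and> \<phi>1 1 = 0 \<and> (\<phi>1 has_real_derivative 1) (at 1)"
  shows "\<exists>k. k \<ge> 0 \<and> \<phi> k \<noteq> 0 \<and> (\<lambda>t. enn2real (\<phi> t)) differentiable (at k)"
proof (rule ccontr)
  assume neg: "\<not> ?thesis"
  from assms obtain \<epsilon> \<phi>1 where e: "\<epsilon> > 0"
    and d: "\<And>x. x\<in>ball 1 \<epsilon> \<Longrightarrow> ((\<lambda>t. enn2real (\<phi> t)) has_real_derivative \<phi>1 x) (at x)"
    and d1: "(\<phi>1 has_real_derivative 1) (at 1)" by blast
  define \<delta> where "\<delta> = min \<epsilon> (1/2)"
  have dpos: "\<delta> > 0" using e by (simp add: \<delta>_def)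
  have sub: "ball 1 \<delta> \<subseteq> ball 1 \<epsilon>" by (auto simp: \<delta>_def)
  have nn: "\<And>x. x \<in> ball (1::real) \<delta> \<Longrightarrow> x \<ge> 0"
    by (auto simp: \<delta>_def dist_real_def abs_if split: if_splits)
  have zero: "\<And>x. x \<in> ball 1 \<delta> \<Longrightarrow> \<phi> x = 0"
  proof -
    fix x assume x: "x \<in> ball (1::real) \<delta>"
    then have "(\<lambda>t. enn2real (\<phi> t)) differentiable (at x)"
      using d sub real_differentiable_def by blast
    then show "\<phi> x = 0" using neg nn[OF x] by blast
  qed
  have phi1z: "\<phi>1 x = 0" if x: "x \<in> ball 1 \<delta>" for x
  proof -
    have "((\<lambda>t. enn2real (\<phi> t)) has_real_derivative 0) (at x)"
    proof (rule has_field_derivative_transform_within_open[where f="\<lambda>_. 0" and S="ball 1 \<delta>"])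
      show "((\<lambda>_. 0) has_real_derivative 0) (at x)" by simp
      show "open (ball (1::real) \<delta>)" by simp
      show "x \<in> ball 1 \<delta>" by fact
      show "\<And>y. y \<in> ball 1 \<delta> \<Longrightarrow> 0 = enn2real (\<phi> y)" using zero by simp
    qed
    moreover have "((\<lambda>t. enn2real (\<phi> t)) has_real_derivative \<phi>1 x) (at x)"
      using d sub x by blast
    ultimately show ?thesis using DERIV_unique by blast
  qed
  have "(\<phi>1 has_real_derivative 0) (at 1)"
  proof (rule has_field_derivative_transform_within_open[where f="\<lambda>_. 0" and S="ball 1 \<delta>"])
    show "((\<lambda>_. 0) has_real_derivative 0) (at 1)" by simp
    show "open (ball (1::real) \<delta>)" by simp
    show "1 \<in> ball (1::real) \<delta>" using dpos by simp
    show "\<And>y. y \<in> ball 1 \<delta> \<Longrightarrow> 0 = \<phi>1 y" using phi1z by simp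
  qed
  then show False using d1 DERIV_unique by fastforce
qed

theorem mainTheorem11:
  fixes \<Omega> :: "'a::euclidean_space set"
    and \<pi> :: "'a measure"
    and \<phi> :: "real \<Rightarrow> ennreal"
  assumes "open \<Omega>" and "lipschitz_boundary \<Omega>"
    and "\<pi> \<in> finite_measures_on \<Omega>" and "emeasure \<pi> \<Omega> > 0"
    and "convex_ennreal_on_nonneg \<phi>"
    and "\<exists>\<epsilon>>0. \<exists>\<phi>1. (\<forall>x\<in>ball 1 \<epsilon>. \<phi> x < \<infinity> \<and>
            ((\<lambda>t. enn2real (\<phi> t)) has_real_derivative \<phi>1 x) (at x))
          \<and> \<phi>1 1 = 0 \<and> (\<phi>1 has_real_derivative 1) (at 1)"
    and "\<phi> 1 = 0"
  shows "\<not> (\<exists>c>0. \<forall>\<mu> \<in> finite_measures_on \<Omega>. \<forall>\<rho> G.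
            \<rho> \<in> borel_measurable \<pi> \<and> (\<forall>x\<in>\<Omega>. \<rho> x \<ge> 0) \<and>
            \<mu> = density \<pi> (\<lambda>x. ennreal (\<rho> x)) \<and>
            (\<forall>x\<in>\<Omega>. (\<lambda>t. enn2real (\<phi> t)) differentiable (at (\<rho> x))) \<and>
            (\<forall>x\<in>\<Omega>. GDERIV (\<lambda>y. deriv (\<lambda>t. enn2real (\<phi> t)) (\<rho> y)) x :> G x)
            \<longrightarrow> (\<integral>\<^sup>+ x. ennreal ((norm (G x))\<^sup>2) \<partial>\<mu>) \<ge> ennreal c * phi_div \<phi> \<mu> \<pi>)"
proof
  assume "\<exists>c>0. \<forall>\<mu> \<in> finite_measures_on \<Omega>. \<forall>\<rho> G.
            \<rho> \<in> borel_measurable \<pi> \<and> (\<forall>x\<in>\<Omega>. \<rho> x \<ge> 0) \<and>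
            \<mu> = density \<pi> (\<lambda>x. ennreal (\<rho> x)) \<and>
            (\<forall>x\<in>\<Omega>. (\<lambda>t. enn2real (\<phi> t)) differentiable (at (\<rho> x))) \<and>
            (\<forall>x\<in>\<Omega>. GDERIV (\<lambda>y. deriv (\<lambda>t. enn2real (\<phi> t)) (\<rho> y)) x :> G x)
            \<longrightarrow> (\<integral>\<^sup>+ x. ennreal ((norm (G x))\<^sup>2) \<partial>\<mu>) \<ge> ennreal c * phi_div \<phi> \<mu> \<pi>"
  then obtain c where c: "c > 0" and H: "\<forall>\<mu> \<in> finite_measures_on \<Omega>. \<forall>\<rho> G.
            \<rho> \<in> borel_measurable \<pi> \<and> (\<forall>x\<in>\<Omega>. \<rho> x \<ge> 0) \<and>
            \<mu> = density \<pi> (\<lambda>x. ennreal (\<rho> x)) \<and>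
            (\<forall>x\<in>\<Omega>. (\<lambda>t. enn2real (\<phi> t)) differentiable (at (\<rho> x))) \<and>
            (\<forall>x\<in>\<Omega>. GDERIV (\<lambda>y. deriv (\<lambda>t. enn2real (\<phi> t)) (\<rho> y)) x :> G x)
            \<longrightarrow> (\<integral>\<^sup>+ x. ennreal ((norm (G x))\<^sup>2) \<partial>\<mu>) \<ge> ennreal c * phi_div \<phi> \<mu> \<pi>" by blast
  obtain k where k: "k \<ge> 0" "\<phi> k \<noteq> 0" "(\<lambda>t. enn2real (\<phi> t)) differentiable (at k)"
    using exists_pos_point[OF assms(6)] by blast
  have sp: "sets \<pi> = sets (restrict_space borel \<Omega>)" and fin: "finite_measure \<pi>"
    using assms(3) by (auto simp: finite_measures_on_def)
  have spc: "space \<pi> = \<Omega>" using sets_eq_imp_space_eq[OF sp] by (simp add: space_restrict_space)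
  interpret finite_measure \<pi> by fact
  define \<mu> where "\<mu> = density \<pi> (\<lambda>x. ennreal k)"
  have "finite_measure \<mu>"
  proof
    have "emeasure \<mu> (space \<mu>) = ennreal k * emeasure \<pi> (space \<pi>)"
      unfolding \<mu>_def by (simp add: emeasure_density nn_integral_const)
    then show "emeasure \<mu> (space \<mu>) \<noteq> \<infinity>"
      by (simp add: ennreal_mult_eq_top_iff)
  qed
  then have muin: "\<mu> \<in> finite_measures_on \<Omega>"
    using sp by (simp add: finite_measures_on_def \<mu>_def)
  have gd: "GDERIV (\<lambda>y. deriv (\<lambda>t. enn2real (\<phi> t)) ((\<lambda>_. k) y)) x :> (\<lambda>_. 0) x" for x :: 'a
    unfolding gderiv_def by (simp add: has_derivative_const)
  have ineq: "(\<integral>\<^sup>+ x. ennreal ((norm ((\<lambda>_. 0::'a) x))\<^sup>2) \<partial>\<mu>) \<ge> ennreal c * phi_div \<phi> \<mu> \<pi>"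
  proof -
    have "\<forall>\<rho> G.
            \<rho> \<in> borel_measurable \<pi> \<and> (\<forall>x\<in>\<Omega>. \<rho> x \<ge> 0) \<and>
            \<mu> = density \<pi> (\<lambda>x. ennreal (\<rho> x)) \<and>
            (\<forall>x\<in>\<Omega>. (\<lambda>t. enn2real (\<phi> t)) differentiable (at (\<rho> x))) \<and>
            (\<forall>x\<in>\<Omega>. GDERIV (\<lambda>y. deriv (\<lambda>t. enn2real (\<phi> t)) (\<rho> y)) x :> G x)
            \<longrightarrow> (\<integral>\<^sup>+ x. ennreal ((norm (G x))\<^sup>2) \<partial>\<mu>) \<ge> ennreal c * phi_div \<phi> \<mu> \<pi>"
      using H muin by blast
    from spec[OF spec[OF this, of "\<lambda>_. k"], of "\<lambda>_. 0"] show ?thesis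
      using k gd unfolding \<mu>_def by simp
  qed
  have ac: "absolutely_continuous \<pi> \<mu>"
    unfolding \<mu>_def by (rule absolutely_continuousI_density) simp
  have ae: "AE x in \<pi>. RN_deriv \<pi> \<mu> x = ennreal k"
    using RN_deriv_unique[of "\<lambda>_. ennreal k" \<mu>] unfolding \<mu>_def by (auto elim: AE_mp)
  have "phi_div \<phi> \<mu> \<pi> = (\<integral>\<^sup>+ x. \<phi> k \<partial>\<pi>)"
  proof -
    have "AE x in \<pi>. \<phi> (enn2real (RN_deriv \<pi> \<mu> x)) = \<phi> k"
      using ae by (rule AE_mp) (auto simp: k(1))
    then show ?thesis unfolding phi_div_def using ac by (simp add: nn_integral_cong_AE)
  qed
  also have "\<dots> = \<phi> k * emeasure \<pi> \<Omega>"
    using spc by (simp add: nn_integral_const)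
  finally have pd: "phi_div \<phi> \<mu> \<pi> = \<phi> k * emeasure \<pi> \<Omega>" .
  have "ennreal c * phi_div \<phi> \<mu> \<pi> \<noteq> 0"
    using c k(2) assms(4) pd by (simp add: ennreal_mult_eq_top_iff)
  moreover have "(\<integral>\<^sup>+ x. ennreal ((norm ((\<lambda>_. 0::'a) x))\<^sup>2) \<partial>\<mu>) = 0" by simp
  ultimately show False using ineq by simp
qed

end
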